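(* Let $1>R>\tfrac12$ and $R>P>0$, and let $$\mathrm{ZDSstrip}=\{(x,y)\in\mathbb R^2:\ x\ge -1\ge y,\ -R^{-1}\ge x+y\ge -P^{-1}\}.$$ Assume $(\bar\alpha,\bar\beta)\in\mathrm{ZDSstrip}$ with $\bar\alpha+\bar\beta=-Z^{-1}$. Then $-\bar\beta\ge\max(1,|\bar\alpha|)$, and $-\bar\beta=|\bar\alpha|$ if and only if $\bar\alpha=\bar\beta=-1$. If also $(\bar a,\bar b)\in\mathrm{ZDSstrip}$, then $D=\bar\beta\bar b-\bar\alpha\bar a\ge0$, with equality if and only if $\bar\alpha=\bar\beta=\bar a=\bar b=-1$. *)

theory Defs
  imports Complex_Main
begin

definition ZDSstrip :: "real \<Rightarrow> real \<Rightarrow> (real \<times> real) set" where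
  "ZDSstrip R P = {(x, y). x \<ge> -1 \<and> -1 \<ge> y \<and> - inverse R \<ge> x + y \<and> x + y \<ge> - inverse P}"

end

theory Submission
  imports Defs
begin

lemma key:
  fixes R P x y :: real
  assumes "1 > R" "R > 0" "(x, y) \<in> ZDSstrip R P"
  shows "-y \<ge> 1 \<and> -y \<ge> \<bar>x\<bar> \<and> (-y = \<bar>x\<bar> \<longleftrightarrow> x = -1 \<and> y = -1)"
proof -
  have "inverse R > 1" using assms one_less_inverse by blast
  with assms have h: "x \<ge> -1" "-1 \<ge> y" "x + y < -1" unfolding ZDSstrip_def by auto
  then show ?thesis by (auto simp: abs_if)
qed

theorem lemma3p1:
  fixes R P Z \<alpha> \<beta> :: real
  assumes "1 > R" and "R > 1/2" and "R > P" and "P > 0"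
    and "(\<alpha>, \<beta>) \<in> ZDSstrip R P"
    and "\<alpha> + \<beta> = - inverse Z"
  shows "- \<beta> \<ge> max 1 \<bar>\<alpha>\<bar>
    \<and> ((- \<beta> = \<bar>\<alpha>\<bar>) \<longleftrightarrow> (\<alpha> = -1 \<and> \<beta> = -1))
    \<and> (\<forall>a b :: real. (a, b) \<in> ZDSstrip R P \<longrightarrow>
           \<beta> * b - \<alpha> * a \<ge> 0 \<and>
           (\<beta> * b - \<alpha> * a = 0 \<longleftrightarrow> (\<alpha> = -1 \<and> \<beta> = -1 \<and> a = -1 \<and> b = -1)))"
proof -
  have R0: "R > 0" using assms by linarith
  note k1 = key[OF assms(1) R0 assms(5)]
  have D: "\<beta> * b - \<alpha> * a \<ge> 0 \<and>
           (\<beta> * b - \<alpha> * a = 0 \<longleftrightarrow> (\<alpha> = -1 \<and> \<beta> = -1 \<and> a = -1 \<and> b = -1))"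
    if ab: "(a, b) \<in> ZDSstrip R P" for a b
  proof -
    note k2 = key[OF assms(1) R0 ab]
    have m1: "\<beta> * b = (-\<beta>) * (-b)" by simp
    have ge: "(-\<beta>) * (-b) \<ge> \<bar>\<alpha>\<bar> * \<bar>a\<bar>"
      using k1 k2 by (intro mult_mono) auto
    have aa: "\<alpha> * a \<le> \<bar>\<alpha>\<bar> * \<bar>a\<bar>" by (simp add: abs_mult[symmetric])
    have eq: "(-\<beta>) * (-b) = \<bar>\<alpha>\<bar> * \<bar>a\<bar> \<Longrightarrow> -\<beta> = \<bar>\<alpha>\<bar> \<and> -b = \<bar>a\<bar>"
    proof -
      assume e: "(-\<beta>) * (-b) = \<bar>\<alpha>\<bar> * \<bar>a\<bar>"
      show ?thesis
      proof (rule ccontr)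
        assume "\<not> ?thesis"
        then have "-\<beta> > \<bar>\<alpha>\<bar> \<or> -b > \<bar>a\<bar>" using k1 k2 by linarith
        then have "(-\<beta>) * (-b) > \<bar>\<alpha>\<bar> * \<bar>a\<bar>"
        proof
          assume "-\<beta> > \<bar>\<alpha>\<bar>"
          then have "(-\<beta>) * (-b) > \<bar>\<alpha>\<bar> * (-b)" using k2 by (intro mult_strict_right_mono) auto
          moreover have "\<bar>\<alpha>\<bar> * (-b) \<ge> \<bar>\<alpha>\<bar> * \<bar>a\<bar>" using k2 by (intro mult_left_mono) auto
          ultimately show ?thesis by linarith
        next
          assume "-b > \<bar>a\<bar>"
          then have "(-\<beta>) * (-b) > (-\<beta>) * \<bar>a\<bar>" using k1 by (intro mult_strict_left_mono) auto
          moreover have "(-\<beta>) * \<bar>a\<bar> \<ge> \<bar>\<alpha>\<bar> * \<bar>a\<bar>" using k1 by (intro mult_right_mono) auto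
          ultimately show ?thesis by linarith
        qed
        with e show False by simp
      qed
    qed
    show ?thesis
    proof
      show "\<beta> * b - \<alpha> * a \<ge> 0" using ge aa m1 by linarith
      show "(\<beta> * b - \<alpha> * a = 0) = (\<alpha> = -1 \<and> \<beta> = -1 \<and> a = -1 \<and> b = -1)"
      proof
        assume "\<beta> * b - \<alpha> * a = 0"
        then have "(-\<beta>) * (-b) = \<bar>\<alpha>\<bar> * \<bar>a\<bar>" using ge aa m1 by linarith
        from eq[OF this] k1 k2 show "\<alpha> = -1 \<and> \<beta> = -1 \<and> a = -1 \<and> b = -1" by blast
      qed simp
    qed
  qed
  show ?thesis using k1 D by auto
qed

end
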